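(* Let $a\neq 0$ be a real constant and consider the Hirota–Ramani equation $$u_t-u_{xxt}+a\,u_x(1-u_t)=0$$ for a scalar function $u(x,t)$. A vector field $\mathbf v=\xi(x,t,u)\partial_x+\eta(x,t,u)\partial_t+\varphi(x,t,u)\partial_u$ is an infinitesimal (classical, Lie point) symmetry of this equation if and only if $$\xi=-\tfrac{x}{3}c_1+c_3,\qquad \eta=c_1t+c_2,\qquad \varphi=\Big(\tfrac{2t}{3}+\tfrac{u}{3}-\tfrac{2x}{3a}\Big)c_1+c_4$$ for arbitrary constants $c_1,c_2,c_3,c_4$. Consequently the Lie algebra of infinitesimal point symmetries of the equation is spanned by $$\mathbf v_1=\partial_x,\quad \mathbf v_2=\partial_t,\quad \mathbf v_3=\tfrac1a\partial_u,\quad \mathbf v_4=3t\partial_t-x\partial_x+\Big(2t+u-\tfrac{2x}{a}\Big)\partial_u .$$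
   Context: A vector field $\mathbf v$ on the space of variables $(x,t,u)$ is an infinitesimal symmetry of the equation $\Delta=u_t-u_{xxt}+a u_x(1-u_t)=0$ if its third prolongation $\mathrm{Pr}^{(3)}\mathbf v$ satisfies $\mathrm{Pr}^{(3)}\mathbf v[\Delta]=0$ whenever $\Delta=0$, i.e. the local one-parameter group it generates maps solutions to solutions. *)

theory Defs
  imports "HOL-Analysis.Analysis"
begin

coinductive smooth :: "('a::euclidean_space \<Rightarrow> real) \<Rightarrow> bool" where
  "(\<forall>p. f differentiable (at p)) \<Longrightarrow>
   (\<forall>i\<in>Basis. smooth (\<lambda>p. frechet_derivative f (at p) i)) \<Longrightarrow> smooth f"

definition Dx :: "(real \<times> real \<Rightarrow> real) \<Rightarrow> real \<times> real \<Rightarrow> real" where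
  "Dx f = (\<lambda>p. frechet_derivative f (at p) (1, 0))"
definition Dt :: "(real \<times> real \<Rightarrow> real) \<Rightarrow> real \<times> real \<Rightarrow> real" where
  "Dt f = (\<lambda>p. frechet_derivative f (at p) (0, 1))"

definition HR :: "real \<Rightarrow> (real \<times> real \<Rightarrow> real) \<Rightarrow> real \<times> real \<Rightarrow> real" where
  "HR a u p = Dt u p - Dx (Dx (Dt u)) p + a * Dx u p * (1 - Dt u p)"

definition charQ :: "(real \<times> real \<times> real \<Rightarrow> real) \<Rightarrow> (real \<times> real \<times> real \<Rightarrow> real)
    \<Rightarrow> (real \<times> real \<times> real \<Rightarrow> real) \<Rightarrow> (real \<times> real \<Rightarrow> real) \<Rightarrow> real \<times> real \<Rightarrow> real" where
  "charQ \<xi> \<eta> \<phi> u = (\<lambda>(x, t). \<phi> (x, t, u (x, t)) - \<xi> (x, t, u (x, t)) * Dx u (x, t)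
                                - \<eta> (x, t, u (x, t)) * Dt u (x, t))"

text \<open>Prolongation coefficients phi^J = D_J Q + xi u_{J,x} + eta u_{J,t}, evaluated along
  the prolongation of u (total derivatives become partial derivatives of the composite).\<close>
definition phiX where
  "phiX \<xi> \<eta> \<phi> u = (\<lambda>(x, t). Dx (charQ \<xi> \<eta> \<phi> u) (x, t)
     + \<xi> (x, t, u (x, t)) * Dx (Dx u) (x, t) + \<eta> (x, t, u (x, t)) * Dt (Dx u) (x, t))"
definition phiT where
  "phiT \<xi> \<eta> \<phi> u = (\<lambda>(x, t). Dt (charQ \<xi> \<eta> \<phi> u) (x, t)
     + \<xi> (x, t, u (x, t)) * Dx (Dt u) (x, t) + \<eta> (x, t, u (x, t)) * Dt (Dt u) (x, t))"
definition phiXXT where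
  "phiXXT \<xi> \<eta> \<phi> u = (\<lambda>(x, t). Dx (Dx (Dt (charQ \<xi> \<eta> \<phi> u))) (x, t)
     + \<xi> (x, t, u (x, t)) * Dx (Dx (Dx (Dt u))) (x, t)
     + \<eta> (x, t, u (x, t)) * Dt (Dx (Dx (Dt u))) (x, t))"

text \<open>Delta = u_t - u_xxt + a u_x (1 - u_t) depends only on
  u_x, u_t, u_xxt, with dDelta/du_x = a (1 - u_t), dDelta/du_t = 1 - a u_x,
  dDelta/du_xxt = -1 (and no explicit x, t, u dependence).\<close>
definition prDelta where
  "prDelta a \<xi> \<eta> \<phi> u p =
     phiX \<xi> \<eta> \<phi> u p * (a * (1 - Dt u p)) + phiT \<xi> \<eta> \<phi> u p * (1 - a * Dx u p)
     - phiXXT \<xi> \<eta> \<phi> u p"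

text \<open>Infinitesimal symmetry: pr^(3) v [Delta] = 0 whenever Delta = 0.  Every point of the
  3-jet space is the 3-jet of some smooth u at some point, so it suffices (and is equivalent)
  to quantify over smooth u and points (x,t).\<close>
definition HR_symmetry where
  "HR_symmetry a \<xi> \<eta> \<phi> \<longleftrightarrow>
     (\<forall>u. smooth u \<longrightarrow> (\<forall>p. HR a u p = 0 \<longrightarrow> prDelta a \<xi> \<eta> \<phi> u p = 0))"

end

theory Submission
  imports Defs
begin


abbreviation fd :: "('a::euclidean_space \<Rightarrow> real) \<Rightarrow> 'a \<Rightarrow> 'a \<Rightarrow> real" where
  "fd f p v \<equiv> frechet_derivative f (at p) v"

lemma smooth_diff: "smooth f \<Longrightarrow> f differentiable (at p)"
  by (erule smooth.cases) auto

lemma smooth_part: "smooth f \<Longrightarrow> i \<in> Basis \<Longrightarrow> smooth (\<lambda>p. fd f p i)"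
  by (erule smooth.cases) auto

lemma fd_works: "f differentiable (at p) \<Longrightarrow> (f has_derivative fd f p) (at p)"
  using frechet_derivative_works by blast

lemma basis3: "((1::real),(0::real),(0::real)) \<in> Basis" "((0::real),(1::real),(0::real)) \<in> Basis"
   "((0::real),(0::real),(1::real)) \<in> Basis"
  by (auto simp: Basis_prod_def zero_prod_def)

lemma basis2: "((1::real),(0::real)) \<in> Basis" "((0::real),(1::real)) \<in> Basis"
  by (auto simp: Basis_prod_def)

lemma lin3:
  assumes "linear L"
  shows "L (a::real, b::real, c::real) = a * L (1,0,0) + b * L (0,1,0) + c * L (0,0,1)"
proof -
  have "(a, b, c) = a *\<^sub>R (1,0,0) + b *\<^sub>R (0,1,0) + c *\<^sub>R (0::real,0::real,1::real)" by simp
  then have "L (a,b,c) = L (a *\<^sub>R (1,0,0) + b *\<^sub>R (0,1,0) + c *\<^sub>R (0::real,0::real,1::real))" by metis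
  also have "\<dots> = a *\<^sub>R L (1,0,0) + b *\<^sub>R L (0,1,0) + c *\<^sub>R L (0,0,1)"
    by (simp only: linear_add[OF assms] linear_scale[OF assms])
  also have "\<dots> = a * L (1,0,0) + b * L (0,1,0) + c * L (0,0,1)" by simp
  finally show ?thesis .
qed

inductive_set G :: "('a::euclidean_space \<Rightarrow> real) set" where
  Gs: "smooth f \<Longrightarrow> f \<in> G"
| Gc: "(\<lambda>p. c) \<in> G"
| Gl: "bounded_linear f \<Longrightarrow> f \<in> G"
| Ga: "f \<in> G \<Longrightarrow> g \<in> G \<Longrightarrow> (\<lambda>p. f p + g p) \<in> G"
| Gm: "f \<in> G \<Longrightarrow> g \<in> G \<Longrightarrow> (\<lambda>p. f p * g p) \<in> G"
| Gk: "smooth (F :: real \<times> real \<times> real \<Rightarrow> real) \<Longrightarrow> h1 \<in> G \<Longrightarrow> h2 \<in> G \<Longrightarrow> h3 \<in> G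
       \<Longrightarrow> (\<lambda>p. F (h1 p, h2 p, h3 p)) \<in> G"

lemma fd_comp3:
  fixes F :: "real \<times> real \<times> real \<Rightarrow> real"
  assumes "F differentiable (at (h1 p, h2 p, h3 p))" "h1 differentiable (at p)"
     "h2 differentiable (at p)" "h3 differentiable (at p)"
  shows "(\<lambda>p. F (h1 p, h2 p, h3 p)) differentiable (at p)"
    "fd (\<lambda>p. F (h1 p, h2 p, h3 p)) p v =
       fd h1 p v * fd F (h1 p, h2 p, h3 p) (1,0,0) + fd h2 p v * fd F (h1 p, h2 p, h3 p) (0,1,0)
     + fd h3 p v * fd F (h1 p, h2 p, h3 p) (0,0,1)"
proof -
  have d: "((\<lambda>p. (h1 p, h2 p, h3 p)) has_derivative (\<lambda>v. (fd h1 p v, fd h2 p v, fd h3 p v))) (at p)"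
    using assms by (intro has_derivative_Pair fd_works)
  have c: "((\<lambda>p. F (h1 p, h2 p, h3 p)) has_derivative
      (\<lambda>v. fd F (h1 p, h2 p, h3 p) (fd h1 p v, fd h2 p v, fd h3 p v))) (at p)"
    using has_derivative_compose[OF d fd_works[OF assms(1)]] by simp
  then show "(\<lambda>p. F (h1 p, h2 p, h3 p)) differentiable (at p)" unfolding differentiable_def by blast
  have "fd (\<lambda>p. F (h1 p, h2 p, h3 p)) p v = fd F (h1 p, h2 p, h3 p) (fd h1 p v, fd h2 p v, fd h3 p v)"
    using fun_cong[OF frechet_derivative_at[OF c]] by simp
  also have "\<dots> = fd h1 p v * fd F (h1 p, h2 p, h3 p) (1,0,0) + fd h2 p v * fd F (h1 p, h2 p, h3 p) (0,1,0)
     + fd h3 p v * fd F (h1 p, h2 p, h3 p) (0,0,1)" by (rule lin3[OF linear_frechet_derivative[OF assms(1)]])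
  finally show "fd (\<lambda>p. F (h1 p, h2 p, h3 p)) p v =
       fd h1 p v * fd F (h1 p, h2 p, h3 p) (1,0,0) + fd h2 p v * fd F (h1 p, h2 p, h3 p) (0,1,0)
     + fd h3 p v * fd F (h1 p, h2 p, h3 p) (0,0,1)" .
qed

lemma fd_add:
  assumes "f differentiable (at p)" "g differentiable (at p)"
  shows "(\<lambda>p. f p + g p) differentiable (at p)" "fd (\<lambda>p. f p + g p) p v = fd f p v + fd g p v"
proof -
  have c: "((\<lambda>p. f p + g p) has_derivative (\<lambda>v. fd f p v + fd g p v)) (at p)"
    using assms by (intro has_derivative_add fd_works)
  then show "(\<lambda>p. f p + g p) differentiable (at p)" unfolding differentiable_def by blast
  show "fd (\<lambda>p. f p + g p) p v = fd f p v + fd g p v" using fun_cong[OF frechet_derivative_at[OF c]] by simp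
qed

lemma fd_mult:
  assumes "f differentiable (at p)" "g differentiable (at p)"
  shows "(\<lambda>p. f p * g p) differentiable (at p)" "fd (\<lambda>p. f p * g p) p v = f p * fd g p v + fd f p v * g p"
proof -
  have c: "((\<lambda>p. f p * g p) has_derivative (\<lambda>v. f p * fd g p v + fd f p v * g p)) (at p)"
    using assms by (intro has_derivative_mult fd_works)
  then show "(\<lambda>p. f p * g p) differentiable (at p)" unfolding differentiable_def by blast
  show "fd (\<lambda>p. f p * g p) p v = f p * fd g p v + fd f p v * g p" using fun_cong[OF frechet_derivative_at[OF c]] by simp
qed

lemma fd_lin:
  assumes "bounded_linear f"
  shows "f differentiable (at p)" "fd f p v = f v"
proof -
  have c: "(f has_derivative f) (at p)" using assms by (rule bounded_linear_imp_has_derivative)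
  then show "f differentiable (at p)" unfolding differentiable_def by blast
  show "fd f p v = f v" using fun_cong[OF frechet_derivative_at[OF c]] by simp
qed

lemma G_props:
  "f \<in> G \<Longrightarrow> (\<forall>p. f differentiable (at p)) \<and> (\<forall>i\<in>Basis. (\<lambda>p. fd f p i) \<in> G)"
proof (induction rule: G.induct)
  case (Gs f)
  then show ?case by (auto intro: smooth_diff G.Gs smooth_part)
next
  case (Gc c)
  then show ?case by (auto intro: G.Gc)
next
  case (Gl f)
  then show ?case by (auto simp: fd_lin intro: G.Gc)
next
  case (Ga f g)
  then show ?case by (auto simp: fd_add intro!: G.Ga)
next
  case (Gm f g)
  then show ?case by (auto simp: fd_mult intro!: G.Ga G.Gm)
next
  case (Gk F h1 h2 h3)
  have dF: "\<And>q. F differentiable (at q)" using Gk by (blast intro: smooth_diff)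
  have pF: "\<And>i. i \<in> Basis \<Longrightarrow> (\<lambda>p. fd F (h1 p, h2 p, h3 p) i) \<in> G"
    using G.Gk[OF smooth_part[OF Gk(1)] Gk(2,3,4)] by blast
  show ?case using Gk dF pF[OF basis3(1)] pF[OF basis3(2)] pF[OF basis3(3)]
    by (auto simp: fd_comp3 intro!: G.Ga G.Gm)
qed

lemma G_smooth: "f \<in> G \<Longrightarrow> smooth f"
proof (coinduction arbitrary: f rule: smooth.coinduct)
  case (smooth f)
  then show ?case using G_props by blast
qed



lemma line_deriv:
  fixes G :: "'a::euclidean_space \<Rightarrow> real"
  assumes "G differentiable (at (x + s *\<^sub>R v))"
  shows "((\<lambda>s. G (x + s *\<^sub>R v)) has_real_derivative fd G (x + s *\<^sub>R v) v) (at s)"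
proof -
  have l: "((\<lambda>s. x + s *\<^sub>R v) has_derivative (\<lambda>s. s *\<^sub>R v)) (at s)"
    by (auto intro!: derivative_eq_intros)
  have c: "((\<lambda>s. G (x + s *\<^sub>R v)) has_derivative (\<lambda>h. fd G (x + s *\<^sub>R v) (h *\<^sub>R v))) (at s)"
    using has_derivative_compose[OF l fd_works[OF assms]] by simp
  have "(\<lambda>h. fd G (x + s *\<^sub>R v) (h *\<^sub>R v)) = (*) (fd G (x + s *\<^sub>R v) v)"
    using linear_scale[OF linear_frechet_derivative[OF assms]] by (auto simp: mult.commute)
  with c show ?thesis unfolding has_field_derivative_def by simp
qed

lemma clairaut_mvt:
  fixes F :: "'a::euclidean_space \<Rightarrow> real"
  assumes dF: "\<And>q. F differentiable (at q)"
    and dv: "\<And>q. (\<lambda>q. fd F q v) differentiable (at q)"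
    and h: "h > 0"
  shows "\<exists>\<sigma> \<rho>. 0 < \<sigma> \<and> \<sigma> < h \<and> 0 < \<rho> \<and> \<rho> < h \<and>
     F (q0 + h *\<^sub>R v + h *\<^sub>R w) - F (q0 + h *\<^sub>R v) - F (q0 + h *\<^sub>R w) + F q0
       = h * h * fd (\<lambda>q. fd F q v) (q0 + \<sigma> *\<^sub>R v + \<rho> *\<^sub>R w) w"
proof -
  define g where "g s = F ((q0 + h *\<^sub>R w) + s *\<^sub>R v) - F (q0 + s *\<^sub>R v)" for s
  have "\<And>s. (g has_real_derivative (fd F ((q0 + h *\<^sub>R w) + s *\<^sub>R v) v - fd F (q0 + s *\<^sub>R v) v)) (at s)"
    unfolding g_def by (intro DERIV_diff line_deriv dF)
  from MVT2[OF h this] obtain \<sigma> where s: "0 < \<sigma>" "\<sigma> < h"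
    and eq1: "g h - g 0 = (h - 0) * (fd F ((q0 + h *\<^sub>R w) + \<sigma> *\<^sub>R v) v - fd F (q0 + \<sigma> *\<^sub>R v) v)"
    by blast
  define k where "k r = fd F ((q0 + \<sigma> *\<^sub>R v) + r *\<^sub>R w) v" for r
  have "\<And>r. (k has_real_derivative fd (\<lambda>q. fd F q v) ((q0 + \<sigma> *\<^sub>R v) + r *\<^sub>R w) w) (at r)"
    unfolding k_def using line_deriv[OF dv, of "q0 + \<sigma> *\<^sub>R v"] by blast
  from MVT2[OF h this] obtain \<rho> where r: "0 < \<rho>" "\<rho> < h"
    and eq2: "k h - k 0 = (h - 0) * fd (\<lambda>q. fd F q v) ((q0 + \<sigma> *\<^sub>R v) + \<rho> *\<^sub>R w) w"
    by blast
  have "F (q0 + h *\<^sub>R v + h *\<^sub>R w) - F (q0 + h *\<^sub>R v) - F (q0 + h *\<^sub>R w) + F q0 = g h - g 0"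
    unfolding g_def by (simp add: algebra_simps)
  also have "\<dots> = h * (k h - k 0)" unfolding eq1 k_def by (simp add: algebra_simps)
  also have "\<dots> = h * h * fd (\<lambda>q. fd F q v) (q0 + \<sigma> *\<^sub>R v + \<rho> *\<^sub>R w) w"
    unfolding eq2 by simp
  finally show ?thesis using s r by blast
qed

lemma clairaut:
  fixes F :: "'a::euclidean_space \<Rightarrow> real"
  assumes dF: "\<And>q. F differentiable (at q)"
    and dv: "\<And>q. (\<lambda>q. fd F q v) differentiable (at q)"
    and dw: "\<And>q. (\<lambda>q. fd F q w) differentiable (at q)"
    and cv: "\<And>q. continuous (at q) (\<lambda>q. fd (\<lambda>q. fd F q v) q w)"
    and cw: "\<And>q. continuous (at q) (\<lambda>q. fd (\<lambda>q. fd F q w) q v)"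
  shows "fd (\<lambda>q. fd F q v) q0 w = fd (\<lambda>q. fd F q w) q0 v"
proof (rule ccontr)
  define A where "A q = fd (\<lambda>q. fd F q v) q w" for q
  define B where "B q = fd (\<lambda>q. fd F q w) q v" for q
  assume "fd (\<lambda>q. fd F q v) q0 w \<noteq> fd (\<lambda>q. fd F q w) q0 v"
  then have d: "\<bar>A q0 - B q0\<bar> > 0" unfolding A_def B_def by simp
  define e where "e = \<bar>A q0 - B q0\<bar> / 2"
  have e: "e > 0" using d e_def by simp
  obtain d1 where d1: "d1 > 0" "\<And>y. dist y q0 < d1 \<Longrightarrow> dist (A y) (A q0) < e"
    using cv[of q0] e unfolding continuous_at_eps_delta A_def by blast
  obtain d2 where d2: "d2 > 0" "\<And>y. dist y q0 < d2 \<Longrightarrow> dist (B y) (B q0) < e"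
    using cw[of q0] e unfolding continuous_at_eps_delta B_def by blast
  define h where "h = min d1 d2 / (2 * (norm v + norm w + 1))"
  have pos: "2 * (norm v + norm w + 1) > 0"
    using norm_ge_zero[of v] norm_ge_zero[of w] by (smt (verit))
  have h: "h > 0" using d1 d2 pos unfolding h_def by (intro divide_pos_pos) auto
  have hb: "h * (norm v + norm w) < min d1 d2"
  proof -
    have "h * (norm v + norm w) \<le> h * (norm v + norm w + 1)" using h by simp
    also have "\<dots> = min d1 d2 / 2" unfolding h_def
      using pos by (simp add: divide_simps)
    also have "\<dots> < min d1 d2" using d1(1) d2(1) by (simp add: min_def)
    finally show ?thesis .
  qed
  have near: "dist (q0 + \<sigma> *\<^sub>R a + \<rho> *\<^sub>R b) q0 < min d1 d2"
    if "0 < \<sigma>" "\<sigma> < h" "0 < \<rho>" "\<rho> < h" "norm a + norm b = norm v + norm w" for \<sigma> \<rho> and a b :: 'a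
  proof -
    have "dist (q0 + \<sigma> *\<^sub>R a + \<rho> *\<^sub>R b) q0 = norm (\<sigma> *\<^sub>R a + \<rho> *\<^sub>R b)"
      by (simp add: dist_norm)
    also have "\<dots> \<le> \<sigma> * norm a + \<rho> * norm b"
      using that by (metis (no_types, lifting) abs_of_pos norm_scaleR norm_triangle_ineq)
    also have "\<dots> \<le> h * norm a + h * norm b"
      using that by (intro add_mono mult_right_mono) auto
    also have "\<dots> = h * (norm v + norm w)" using that(5) by (metis distrib_left)
    finally show ?thesis using hb by linarith
  qed
  obtain \<sigma> \<rho> where s1: "0 < \<sigma>" "\<sigma> < h" "0 < \<rho>" "\<rho> < h" and
    e1: "F (q0 + h *\<^sub>R v + h *\<^sub>R w) - F (q0 + h *\<^sub>R v) - F (q0 + h *\<^sub>R w) + F q0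
       = h * h * A (q0 + \<sigma> *\<^sub>R v + \<rho> *\<^sub>R w)"
    using clairaut_mvt[OF dF dv h] unfolding A_def by blast
  obtain \<sigma>' \<rho>' where s2: "0 < \<sigma>'" "\<sigma>' < h" "0 < \<rho>'" "\<rho>' < h" and
    e2: "F (q0 + h *\<^sub>R w + h *\<^sub>R v) - F (q0 + h *\<^sub>R w) - F (q0 + h *\<^sub>R v) + F q0
       = h * h * B (q0 + \<sigma>' *\<^sub>R w + \<rho>' *\<^sub>R v)"
    using clairaut_mvt[OF dF dw h] unfolding B_def by blast
  have "h * h * A (q0 + \<sigma> *\<^sub>R v + \<rho> *\<^sub>R w) = h * h * B (q0 + \<sigma>' *\<^sub>R w + \<rho>' *\<^sub>R v)"
    using e1 e2 by (simp add: algebra_simps)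
  then have AB: "A (q0 + \<sigma> *\<^sub>R v + \<rho> *\<^sub>R w) = B (q0 + \<sigma>' *\<^sub>R w + \<rho>' *\<^sub>R v)" using h by simp
  have "dist (A (q0 + \<sigma> *\<^sub>R v + \<rho> *\<^sub>R w)) (A q0) < e"
    using d1(2) near[OF s1, of v w] by simp
  moreover have "dist (B (q0 + \<sigma>' *\<^sub>R w + \<rho>' *\<^sub>R v)) (B q0) < e"
    using d2(2) near[OF s2, of w v] by simp
  ultimately have "\<bar>A q0 - B q0\<bar> < 2 * e" using AB by (simp add: dist_real_def)
  then show False unfolding e_def by simp
qed



definition P1 :: "(real \<times> real \<times> real \<Rightarrow> real) \<Rightarrow> real \<times> real \<times> real \<Rightarrow> real" where
  "P1 F = (\<lambda>q. fd F q (1,0,0))"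
definition P2 :: "(real \<times> real \<times> real \<Rightarrow> real) \<Rightarrow> real \<times> real \<times> real \<Rightarrow> real" where
  "P2 F = (\<lambda>q. fd F q (0,1,0))"
definition P3 :: "(real \<times> real \<times> real \<Rightarrow> real) \<Rightarrow> real \<times> real \<times> real \<Rightarrow> real" where
  "P3 F = (\<lambda>q. fd F q (0,0,1))"

lemma smooth_clairaut:
  fixes F :: "'a::euclidean_space \<Rightarrow> real"
  assumes "smooth F" "i \<in> Basis" "j \<in> Basis"
  shows "(\<lambda>q. fd (\<lambda>q. fd F q i) q j) = (\<lambda>q. fd (\<lambda>q. fd F q j) q i)"
proof
  fix q0
  have si: "smooth (\<lambda>q. fd F q i)" and sj: "smooth (\<lambda>q. fd F q j)" using assms smooth_part by auto
  have sij: "smooth (\<lambda>q. fd (\<lambda>q. fd F q i) q j)" and sji: "smooth (\<lambda>q. fd (\<lambda>q. fd F q j) q i)"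
    using si sj assms smooth_part by auto
  show "fd (\<lambda>q. fd F q i) q0 j = fd (\<lambda>q. fd F q j) q0 i"
    by (rule clairaut) (use assms si sj sij sji in \<open>auto intro: smooth_diff differentiable_imp_continuous_within\<close>)
qed

lemma smooth_P1 [simp]: "smooth F \<Longrightarrow> smooth (P1 F)"
  and smooth_P2 [simp]: "smooth F \<Longrightarrow> smooth (P2 F)"
  and smooth_P3 [simp]: "smooth F \<Longrightarrow> smooth (P3 F)"
  unfolding P1_def P2_def P3_def using smooth_part basis3 by auto

lemma smooth_Dx [simp]: "smooth f \<Longrightarrow> smooth (Dx f)"
  and smooth_Dt [simp]: "smooth f \<Longrightarrow> smooth (Dt f)"
  unfolding Dx_def Dt_def using smooth_part basis2 by auto

lemma P2_P1: "smooth F \<Longrightarrow> P2 (P1 F) = P1 (P2 F)"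
  and P3_P1: "smooth F \<Longrightarrow> P3 (P1 F) = P1 (P3 F)"
  and P3_P2: "smooth F \<Longrightarrow> P3 (P2 F) = P2 (P3 F)"
  unfolding P1_def P2_def P3_def using smooth_clairaut basis3 by metis+

lemma Dt_Dx: "smooth f \<Longrightarrow> Dt (Dx f) = Dx (Dt f)"
  unfolding Dx_def Dt_def using smooth_clairaut basis2 by metis

lemma smooth_const [simp]: "smooth (\<lambda>p. c)"
  by (rule G_smooth) (rule G.Gc)

lemma smooth_add [simp]: "smooth f \<Longrightarrow> smooth g \<Longrightarrow> smooth (\<lambda>p. f p + g p)"
  by (rule G_smooth) (intro G.Ga G.Gs)
lemma smooth_mult [simp]: "smooth f \<Longrightarrow> smooth g \<Longrightarrow> smooth (\<lambda>p. f p * g p)"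
  by (rule G_smooth) (intro G.Gm G.Gs)
lemma smooth_uminus [simp]: "smooth f \<Longrightarrow> smooth (\<lambda>p. - f p)"
  using smooth_mult[OF smooth_const[of "-1"]] by simp
lemma smooth_diff_fun [simp]: "smooth f \<Longrightarrow> smooth g \<Longrightarrow> smooth (\<lambda>p. f p - g p)"
  using smooth_add[OF _ smooth_uminus] by simp
lemma smooth_divc [simp]: "smooth f \<Longrightarrow> smooth (\<lambda>p. f p / c)"
  using smooth_mult[OF _ smooth_const[of "1/c"]] by simp
lemma smooth_fst [simp]: "smooth (fst :: real \<times> real \<Rightarrow> real)"
  by (rule G_smooth) (intro G.Gl bounded_linear_fst)
lemma smooth_snd [simp]: "smooth (snd :: real \<times> real \<Rightarrow> real)"
  by (rule G_smooth) (intro G.Gl bounded_linear_snd)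
lemma smooth_comp3 [simp]: "smooth F \<Longrightarrow> smooth h1 \<Longrightarrow> smooth h2 \<Longrightarrow> smooth h3
   \<Longrightarrow> smooth (\<lambda>p. F (h1 p, h2 p, h3 p))"
  by (rule G_smooth) (intro G.Gk G.Gs)

lemma P_const [simp]: "P1 (\<lambda>q. c) = (\<lambda>q. 0)" "P2 (\<lambda>q. c) = (\<lambda>q. 0)" "P3 (\<lambda>q. c) = (\<lambda>q. 0)"
  unfolding P1_def P2_def P3_def by simp_all

lemma D_const [simp]: "Dx (\<lambda>q. c) = (\<lambda>q. 0)" "Dt (\<lambda>q. c) = (\<lambda>q. 0)"
  unfolding Dx_def Dt_def by simp_all

lemma D_fst [simp]: "Dx fst = (\<lambda>q. 1)" "Dt fst = (\<lambda>q. 0)"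
  and D_snd [simp]: "Dx snd = (\<lambda>q. 0)" "Dt snd = (\<lambda>q. 1)"
  unfolding Dx_def Dt_def by (simp_all add: fd_lin bounded_linear_fst bounded_linear_snd)

lemma D_add [simp]: "smooth f \<Longrightarrow> smooth g \<Longrightarrow> Dx (\<lambda>p. f p + g p) = (\<lambda>p. Dx f p + Dx g p)"
   "smooth f \<Longrightarrow> smooth g \<Longrightarrow> Dt (\<lambda>p. f p + g p) = (\<lambda>p. Dt f p + Dt g p)"
  unfolding Dx_def Dt_def by (simp_all add: fd_add smooth_diff)

lemma D_mult [simp]: "smooth f \<Longrightarrow> smooth g \<Longrightarrow> Dx (\<lambda>p. f p * g p) = (\<lambda>p. f p * Dx g p + Dx f p * g p)"
   "smooth f \<Longrightarrow> smooth g \<Longrightarrow> Dt (\<lambda>p. f p * g p) = (\<lambda>p. f p * Dt g p + Dt f p * g p)"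
  unfolding Dx_def Dt_def by (simp_all add: fd_mult smooth_diff)

lemma D_uminus [simp]: "smooth f \<Longrightarrow> Dx (\<lambda>p. - f p) = (\<lambda>p. - Dx f p)"
   "smooth f \<Longrightarrow> Dt (\<lambda>p. - f p) = (\<lambda>p. - Dt f p)"
  using D_mult[OF smooth_const[of "-1"], of f] by simp_all

lemma D_diff [simp]: "smooth f \<Longrightarrow> smooth g \<Longrightarrow> Dx (\<lambda>p. f p - g p) = (\<lambda>p. Dx f p - Dx g p)"
   "smooth f \<Longrightarrow> smooth g \<Longrightarrow> Dt (\<lambda>p. f p - g p) = (\<lambda>p. Dt f p - Dt g p)"
  using D_add[OF _ smooth_uminus, of f g] D_uminus[of g] by simp_all

lemma D_divc [simp]: "smooth f \<Longrightarrow> Dx (\<lambda>p. f p / c) = (\<lambda>p. Dx f p / c)"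
   "smooth f \<Longrightarrow> Dt (\<lambda>p. f p / c) = (\<lambda>p. Dt f p / c)"
  using D_mult[OF _ smooth_const[of "1/c"], of f] by simp_all

lemma D_comp3 [simp]: "smooth F \<Longrightarrow> smooth h1 \<Longrightarrow> smooth h2 \<Longrightarrow> smooth h3 \<Longrightarrow>
  Dx (\<lambda>p. F (h1 p, h2 p, h3 p)) = (\<lambda>p. Dx h1 p * P1 F (h1 p, h2 p, h3 p)
     + Dx h2 p * P2 F (h1 p, h2 p, h3 p) + Dx h3 p * P3 F (h1 p, h2 p, h3 p))"
  "smooth F \<Longrightarrow> smooth h1 \<Longrightarrow> smooth h2 \<Longrightarrow> smooth h3 \<Longrightarrow>
  Dt (\<lambda>p. F (h1 p, h2 p, h3 p)) = (\<lambda>p. Dt h1 p * P1 F (h1 p, h2 p, h3 p)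
     + Dt h2 p * P2 F (h1 p, h2 p, h3 p) + Dt h3 p * P3 F (h1 p, h2 p, h3 p))"
  unfolding Dx_def Dt_def P1_def P2_def P3_def by (simp_all add: fd_comp3 smooth_diff)

definition comp3 :: "(real \<times> real \<times> real \<Rightarrow> real) \<Rightarrow> ('a::euclidean_space \<Rightarrow> real) \<Rightarrow> ('a \<Rightarrow> real) \<Rightarrow> ('a \<Rightarrow> real) \<Rightarrow> 'a \<Rightarrow> real" where
  "comp3 F h1 h2 h3 = (\<lambda>p. F (h1 p, h2 p, h3 p))"

lemma smooth_comp3' [simp]: "smooth F \<Longrightarrow> smooth h1 \<Longrightarrow> smooth h2 \<Longrightarrow> smooth h3
   \<Longrightarrow> smooth (comp3 F h1 h2 h3)"
  unfolding comp3_def by (rule smooth_comp3)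

lemma D_comp3' [simp]: "smooth F \<Longrightarrow> smooth h1 \<Longrightarrow> smooth h2 \<Longrightarrow> smooth h3 \<Longrightarrow>
  Dx (comp3 F h1 h2 h3) = (\<lambda>p. Dx h1 p * comp3 (P1 F) h1 h2 h3 p
     + Dx h2 p * comp3 (P2 F) h1 h2 h3 p + Dx h3 p * comp3 (P3 F) h1 h2 h3 p)"
  "smooth F \<Longrightarrow> smooth h1 \<Longrightarrow> smooth h2 \<Longrightarrow> smooth h3 \<Longrightarrow>
  Dt (comp3 F h1 h2 h3) = (\<lambda>p. Dt h1 p * comp3 (P1 F) h1 h2 h3 p
     + Dt h2 p * comp3 (P2 F) h1 h2 h3 p + Dt h3 p * comp3 (P3 F) h1 h2 h3 p)"
  unfolding comp3_def by simp_all

lemma charQ_eq: "charQ \<xi> \<eta> \<phi> u = (\<lambda>p. comp3 \<phi> fst snd u p - comp3 \<xi> fst snd u p * Dx u p - comp3 \<eta> fst snd u p * Dt u p)"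
  unfolding charQ_def comp3_def by (simp add: case_prod_unfold)



lemma if_dir:
  fixes a :: real and \<xi> \<eta> \<phi> :: "real \<times> real \<times> real \<Rightarrow> real"
  assumes a: "a \<noteq> 0"
   and h: "\<forall>x t u. \<xi> (x, t, u) = - (x / 3) * c1 + c3 \<and>
        \<eta> (x, t, u) = c1 * t + c2 \<and>
        \<phi> (x, t, u) = (2 * t / 3 + u / 3 - 2 * x / (3 * a)) * c1 + c4"
  shows "HR_symmetry a \<xi> \<eta> \<phi>"
  unfolding HR_symmetry_def
proof (intro allI impI)
  fix u :: "real \<times> real \<Rightarrow> real" and p :: "real \<times> real"
  assume su: "smooth u"
  have Q: "charQ \<xi> \<eta> \<phi> u = (\<lambda>p. (2 * snd p / 3 + u p / 3 - 2 * fst p / (3 * a)) * c1 + c4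
     - (- (fst p / 3) * c1 + c3) * Dx u p - (c1 * snd p + c2) * Dt u p)"
    unfolding charQ_def using h by (auto simp: case_prod_unfold)
  obtain x t where p: "p = (x, t)" by fastforce
  have hx: "\<And>x t u. \<xi> (x, t, u) = - (x / 3) * c1 + c3" 
   and ht: "\<And>x t u. \<eta> (x, t, u) = c1 * t + c2"
   and hp: "\<And>x t u. \<phi> (x, t, u) = (2 * t / 3 + u / 3 - 2 * x / (3 * a)) * c1 + c4" using h by auto
  show "prDelta a \<xi> \<eta> \<phi> u p = 0"
    unfolding prDelta_def phiX_def phiT_def phiXXT_def Q p using su a
    by (simp add: Dt_Dx hx ht hp field_simps)
qed



definition U :: "real \<Rightarrow> real \<Rightarrow> real \<Rightarrow> real \<Rightarrow> real \<Rightarrow> real \<Rightarrow> real \<Rightarrow> real \<Rightarrow> real \<Rightarrow> real \<Rightarrow> real \<times> real \<Rightarrow> real" where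
  "U x0 t0 u0 pp q r s e f g = (\<lambda>p. u0 + pp * (fst p - x0) + q * (snd p - t0) + r * (fst p - x0) * (fst p - x0) / 2
     + s * (fst p - x0) * (snd p - t0) + e * (fst p - x0) * (fst p - x0) * (fst p - x0) / 6
     + f * (fst p - x0) * (fst p - x0) * (snd p - t0) / 2 + g * (fst p - x0) * (snd p - t0) * (snd p - t0) / 2)"

lemma smooth_U: "smooth (U x0 t0 u0 pp q r s e f g)"
  unfolding U_def by simp

lemma HR_U: "HR a (U x0 t0 u0 pp q r s e (q + a * pp * (1 - q)) g) (x0, t0) = 0"
  unfolding HR_def U_def by simp

lemmas expand_defs = prDelta_def phiX_def phiT_def phiXXT_def charQ_eq U_def

lemma K:
  assumes "HR_symmetry a \<xi> \<eta> \<phi>"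
  shows "prDelta a \<xi> \<eta> \<phi> (U x0 t0 u0 pp q r s e (q + a * pp * (1 - q)) g) (x0, t0) = 0"
  using assms unfolding HR_symmetry_def by (simp add: smooth_U HR_U)


lemma stage1a:
  assumes S: "HR_symmetry a \<xi> \<eta> \<phi>" and sm: "smooth \<xi>" "smooth \<eta>" "smooth \<phi>"
  shows "P2 \<xi> = (\<lambda>_. 0)"
proof
  fix q :: "real \<times> real \<times> real" obtain x t u where q: "q = (x,t,u)" by (cases q) auto
  show "P2 \<xi> q = 0" unfolding q
  using K[OF S, of x t u 0 0 0 0 1 0] K[OF S, of x t u 0 0 0 0 0 0] sm
  unfolding expand_defs
  apply (simp add: P2_P1 P3_P1 P3_P2)
  apply (simp add: comp3_def)
  done
qed

lemma stage1b:
  assumes S: "HR_symmetry a \<xi> \<eta> \<phi>" and sm: "smooth \<xi>" "smooth \<eta>" "smooth \<phi>"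
    and z1: "P2 \<xi> = (\<lambda>_. 0)"
  shows "P3 \<xi> = (\<lambda>_. 0)"
proof
  fix q :: "real \<times> real \<times> real" obtain x t u where q: "q = (x,t,u)" by (cases q) auto
  show "P3 \<xi> q = 0" unfolding q
  using K[OF S, of x t u 0 1 0 0 1 0] K[OF S, of x t u 0 1 0 0 0 0] sm
  unfolding expand_defs
  apply (simp add: P2_P1 P3_P1 P3_P2 z1)
  apply (simp add: comp3_def)
  done
qed

lemma stage2a:
  assumes S: "HR_symmetry a \<xi> \<eta> \<phi>" and sm: "smooth \<xi>" "smooth \<eta>" "smooth \<phi>"
    and z1: "P2 \<xi> = (\<lambda>_. 0)" "P3 \<xi> = (\<lambda>_. 0)"
  shows "P1 \<eta> = (\<lambda>_. 0)"
proof
  fix q :: "real \<times> real \<times> real" obtain x t u where q: "q = (x,t,u)" by (cases q) auto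
  show "P1 \<eta> q = 0" unfolding q
  using K[OF S, of x t u 0 0 0 0 0 1] K[OF S, of x t u 0 0 0 0 0 0] sm
  unfolding expand_defs
  apply (simp add: P2_P1 P3_P1 P3_P2 z1)
  apply (simp add: comp3_def)
  done
qed

lemma stage2b:
  assumes S: "HR_symmetry a \<xi> \<eta> \<phi>" and sm: "smooth \<xi>" "smooth \<eta>" "smooth \<phi>"
    and z1: "P2 \<xi> = (\<lambda>_. 0)" "P3 \<xi> = (\<lambda>_. 0)" "P1 \<eta> = (\<lambda>_. 0)"
  shows "P3 \<eta> = (\<lambda>_. 0)"
proof
  fix q :: "real \<times> real \<times> real" obtain x t u where q: "q = (x,t,u)" by (cases q) auto
  show "P3 \<eta> q = 0" unfolding q
  using K[OF S, of x t u 1 0 0 0 0 1] K[OF S, of x t u 1 0 0 0 0 0] sm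
  unfolding expand_defs
  apply (simp add: P2_P1 P3_P1 P3_P2 z1)
  apply (simp add: comp3_def)
  done
qed


lemma stage3a:
  assumes S: "HR_symmetry a \<xi> \<eta> \<phi>" and sm: "smooth \<xi>" "smooth \<eta>" "smooth \<phi>"
    and z1: "P2 \<xi> = (\<lambda>_. 0)" "P3 \<xi> = (\<lambda>_. 0)" "P1 \<eta> = (\<lambda>_. 0)" "P3 \<eta> = (\<lambda>_. 0)"
       "P1 (P2 \<eta>) = (\<lambda>_. 0)"
  shows "P2 (P3 \<phi>) = (\<lambda>_. 0)"
proof
  fix q :: "real \<times> real \<times> real" obtain x t u where q: "q = (x,t,u)" by (cases q) auto
  show "P2 (P3 \<phi>) q = 0" unfolding q
  using K[OF S, of x t u 0 0 1 0 0 0] K[OF S, of x t u 0 0 0 0 0 0] sm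
  unfolding expand_defs
  apply (simp add: P2_P1 P3_P1 P3_P2 z1)
  apply (simp add: comp3_def)
  done
qed

lemma stage3b:
  assumes S: "HR_symmetry a \<xi> \<eta> \<phi>" and sm: "smooth \<xi>" "smooth \<eta>" "smooth \<phi>"
    and z1: "P2 \<xi> = (\<lambda>_. 0)" "P3 \<xi> = (\<lambda>_. 0)" "P1 \<eta> = (\<lambda>_. 0)" "P3 \<eta> = (\<lambda>_. 0)"
       "P1 (P2 \<eta>) = (\<lambda>_. 0)" "P2 (P3 \<phi>) = (\<lambda>_. 0)"
  shows "P3 (P3 \<phi>) = (\<lambda>_. 0)"
proof
  fix q :: "real \<times> real \<times> real" obtain x t u where q: "q = (x,t,u)" by (cases q) auto
  show "P3 (P3 \<phi>) q = 0" unfolding q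
  using K[OF S, of x t u 0 1 1 0 0 0] K[OF S, of x t u 0 1 0 0 0 0] sm
  unfolding expand_defs
  apply (simp add: P2_P1 P3_P1 P3_P2 z1)
  apply (simp add: comp3_def)
  done
qed

lemma stage4:
  assumes S: "HR_symmetry a \<xi> \<eta> \<phi>" and sm: "smooth \<xi>" "smooth \<eta>" "smooth \<phi>"
    and z1: "P2 \<xi> = (\<lambda>_. 0)" "P3 \<xi> = (\<lambda>_. 0)" "P1 \<eta> = (\<lambda>_. 0)" "P3 \<eta> = (\<lambda>_. 0)"
       "P1 (P2 \<eta>) = (\<lambda>_. 0)" "P2 (P3 \<phi>) = (\<lambda>_. 0)" "P3 (P3 \<phi>) = (\<lambda>_. 0)"
  shows "2 * P1 (P3 \<phi>) (x, t, u) = P1 (P1 \<xi>) (x, t, u)"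
  using K[OF S, of x t u 0 0 0 1 0 0] K[OF S, of x t u 0 0 0 0 0 0] sm
  unfolding expand_defs
  apply (simp add: P2_P1 P3_P1 P3_P2 z1)
  apply (simp add: comp3_def)
  done

lemma stage5:
  assumes S: "HR_symmetry a \<xi> \<eta> \<phi>" and sm: "smooth \<xi>" "smooth \<eta>" "smooth \<phi>"
    and z1: "P2 \<xi> = (\<lambda>_. 0)" "P3 \<xi> = (\<lambda>_. 0)" "P1 \<eta> = (\<lambda>_. 0)" "P3 \<eta> = (\<lambda>_. 0)"
       "P1 (P2 \<eta>) = (\<lambda>_. 0)" "P2 (P3 \<phi>) = (\<lambda>_. 0)" "P3 (P3 \<phi>) = (\<lambda>_. 0)"
    and a: "a \<noteq> 0"
  shows "P3 \<phi> (x, t, u) = - P1 \<xi> (x, t, u) \<and> P2 \<phi> (x, t, u) = P1 \<xi> (x, t, u) + P2 \<eta> (x, t, u)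
    \<and> a * P1 \<phi> (x, t, u) = 2 * P1 \<xi> (x, t, u) - P1 (P1 (P3 \<phi>)) (x, t, u)
    \<and> a * P1 \<phi> (x, t, u) + P2 \<phi> (x, t, u) = P1 (P1 (P2 \<phi>)) (x, t, u)"
proof -
  have E1: "(P2 \<phi> (x, t, u) + (P3 \<phi> (x, t, u) - P2 \<eta> (x, t, u))) * (1 - a) =
      P1 (P1 (P2 \<phi>)) (x, t, u) +
      (P1 (P1 (P3 \<phi>)) (x, t, u) +
       (P3 \<phi> (x, t, u) + (- P2 \<eta> (x, t, u) - 2 * P1 \<xi> (x, t, u))))"
  using K[OF S, of x t u 1 1 0 0 0 0] sm
  unfolding expand_defs
  apply (simp add: P2_P1 P3_P1 P3_P2 z1)
  apply (simp add: comp3_def)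
  done
  have E2: "(P1 \<phi> (x, t, u) + P3 \<phi> (x, t, u) - P1 \<xi> (x, t, u)) * a +
      P2 \<phi> (x, t, u) * (1 - a) =
      P1 (P1 (P2 \<phi>)) (x, t, u) +
      (a * P3 \<phi> (x, t, u) - 2 * (a * P1 \<xi> (x, t, u))) -
      P2 \<eta> (x, t, u) * a"
  using K[OF S, of x t u 1 0 0 0 0 0] sm
  unfolding expand_defs
  apply (simp add: P2_P1 P3_P1 P3_P2 z1)
  apply (simp add: comp3_def)
  done
  have E3: "P2 \<phi> (x, t, u) +
      (2 * P1 \<xi> (x, t, u) +
       (- P1 (P1 (P3 \<phi>)) (x, t, u) - P1 (P1 (P2 \<phi>)) (x, t, u))) =
      0"
  using K[OF S, of x t u 0 1 0 0 0 0] sm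
  unfolding expand_defs
  apply (simp add: P2_P1 P3_P1 P3_P2 z1)
  apply (simp add: comp3_def)
  done
  have E4: "P1 \<phi> (x, t, u) * a + P2 \<phi> (x, t, u) = P1 (P1 (P2 \<phi>)) (x, t, u)"
  using K[OF S, of x t u 0 0 0 0 0 0] sm
  unfolding expand_defs
  apply (simp add: P2_P1 P3_P1 P3_P2 z1)
  apply (simp add: comp3_def)
  done
  note E = E1 E2 E3 E4
  have "a * (P2 \<phi> (x, t, u) - P1 \<xi> (x, t, u) - P2 \<eta> (x, t, u)) = 0" using E(2,4) by algebra
  then have e2: "P2 \<phi> (x, t, u) = P1 \<xi> (x, t, u) + P2 \<eta> (x, t, u)" using a by simp
  have "a * (P3 \<phi> (x, t, u) + P1 \<xi> (x, t, u)) = 0" using E e2 by algebra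
  then have e3: "P3 \<phi> (x, t, u) = - P1 \<xi> (x, t, u)" using a by simp
  have e4: "a * P1 \<phi> (x, t, u) = 2 * P1 \<xi> (x, t, u) - P1 (P1 (P3 \<phi>)) (x, t, u)" using E by algebra
  show ?thesis using e2 e3 e4 E(4) by (simp add: mult.commute)
qed



lemma P1_uminus: "smooth F \<Longrightarrow> P1 (\<lambda>q. - F q) = (\<lambda>q. - P1 F q)"
proof
  fix q assume "smooth F"
  then have d: "F differentiable (at q)" by (rule smooth_diff)
  have c: "((\<lambda>q. - F q) has_derivative (\<lambda>v. - fd F q v)) (at q)"
    using d by (intro has_derivative_minus fd_works)
  show "P1 (\<lambda>q. - F q) q = - P1 F q"
    unfolding P1_def using fun_cong[OF frechet_derivative_at[OF c]] by simp
qed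

lemma P1_add: "smooth F \<Longrightarrow> smooth F2 \<Longrightarrow> P1 (\<lambda>q. F q + F2 q) = (\<lambda>q. P1 F q + P1 F2 q)"
  unfolding P1_def by (rule ext) (simp add: fd_add smooth_diff)

lemma affine3:
  fixes F :: "real \<times> real \<times> real \<Rightarrow> real"
  assumes sF: "smooth F" and h1: "\<And>q. P1 F q = \<alpha>" and h2: "\<And>q. P2 F q = \<beta>" and h3: "\<And>q. P3 F q = \<gamma>"
  shows "F (x, t, u) = F (0, 0, 0) + \<alpha> * x + \<beta> * t + \<gamma> * u"
proof -
  define H where "H q = F q - (\<alpha> * fst q + \<beta> * fst (snd q) + \<gamma> * snd (snd q))" for q :: "real \<times> real \<times> real"
  have "(H has_derivative (\<lambda>h. 0)) (at q within UNIV)" for q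
  proof -
    have d: "F differentiable (at q)" using sF by (rule smooth_diff)
    have e: "fd F q h = \<alpha> * fst h + \<beta> * fst (snd h) + \<gamma> * snd (snd h)" for h
    proof -
      obtain h1 h2 h3 where hh: "h = (h1, h2, h3)" by (cases h) auto
      show ?thesis using lin3[OF linear_frechet_derivative[OF d], of h1 h2 h3] h1 h2 h3
        unfolding hh P1_def P2_def P3_def by (simp add: mult.commute)
    qed
    have "(H has_derivative (\<lambda>h. fd F q h - (\<alpha> * fst h + \<beta> * fst (snd h) + \<gamma> * snd (snd h)))) (at q)"
      unfolding H_def by (intro has_derivative_diff fd_works[OF d]) (auto intro!: derivative_eq_intros)
    then show ?thesis using e by simp
  qed
  then obtain c where "\<And>q. H q = c" using has_derivative_zero_constant[of UNIV H] by auto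
  from this[of "(x,t,u)"] this[of "(0,0,0)"] show ?thesis unfolding H_def by simp
qed



lemma triple_ext: "(\<And>x t u. f (x, t, u) = g (x, t, u)) \<Longrightarrow> f = g"
  by (rule ext) (metis prod_cases3)

lemma only_if:
  fixes a :: real and \<xi> \<eta> \<phi> :: "real \<times> real \<times> real \<Rightarrow> real"
  assumes a: "a \<noteq> 0" and sm: "smooth \<xi>" "smooth \<eta>" "smooth \<phi>" and S: "HR_symmetry a \<xi> \<eta> \<phi>"
  shows "\<exists>c1 c2 c3 c4 :: real. \<forall>x t u.
        \<xi> (x, t, u) = - (x / 3) * c1 + c3 \<and>
        \<eta> (x, t, u) = c1 * t + c2 \<and>
        \<phi> (x, t, u) = (2 * t / 3 + u / 3 - 2 * x / (3 * a)) * c1 + c4"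
proof -
  have z1: "P2 \<xi> = (\<lambda>_. 0)" by (rule stage1a[OF S sm])
  have z2: "P3 \<xi> = (\<lambda>_. 0)" by (rule stage1b[OF S sm z1])
  have z3: "P1 \<eta> = (\<lambda>_. 0)" by (rule stage2a[OF S sm z1 z2])
  have z4: "P3 \<eta> = (\<lambda>_. 0)" by (rule stage2b[OF S sm z1 z2 z3])
  have z5: "P1 (P2 \<eta>) = (\<lambda>_. 0)" using P2_P1[OF sm(2)] z3 by simp
  have z6: "P2 (P3 \<phi>) = (\<lambda>_. 0)" by (rule stage3a[OF S sm z1 z2 z3 z4 z5])
  have z7: "P3 (P3 \<phi>) = (\<lambda>_. 0)" by (rule stage3b[OF S sm z1 z2 z3 z4 z5 z6])
  note st4 = stage4[OF S sm z1 z2 z3 z4 z5 z6 z7]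
  note st5 = stage5[OF S sm z1 z2 z3 z4 z5 z6 z7 a]
  have F1: "P3 \<phi> = (\<lambda>q. - P1 \<xi> q)" by (rule triple_ext) (use st5 in simp)
  have F2: "P2 \<phi> = (\<lambda>q. P1 \<xi> q + P2 \<eta> q)" by (rule triple_ext) (use st5 in simp)
  have F13: "P1 (P3 \<phi>) = (\<lambda>q. - P1 (P1 \<xi>) q)" unfolding F1 using sm by (simp add: P1_uminus)
  have Z8: "P1 (P1 \<xi>) = (\<lambda>_. 0)"
  proof (rule triple_ext)
    fix x t u
    show "P1 (P1 \<xi>) (x, t, u) = 0" using st4[of x t u] fun_cong[OF F13, of "(x,t,u)"] by simp
  qed
  have Z9: "P1 (P3 \<phi>) = (\<lambda>_. 0)" using F13 Z8 by simp
  have Z10: "P1 (P2 \<phi>) = (\<lambda>_. 0)" unfolding F2 using sm by (simp add: P1_add Z8 z5)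
  define k where "k = P1 \<xi> (0, 0, 0)"
  have "P1 \<xi> (x, t, u) = P1 \<xi> (0, 0, 0) + 0 * x + 0 * t + 0 * u" for x t u
  proof (rule affine3)
    show "smooth (P1 \<xi>)" using sm by simp
    show "P1 (P1 \<xi>) q = 0" for q using Z8 by simp
    show "P2 (P1 \<xi>) q = 0" for q using P2_P1[OF sm(1)] z1 by simp
    show "P3 (P1 \<xi>) q = 0" for q using P3_P1[OF sm(1)] z2 by simp
  qed
  then have k: "P1 \<xi> q = k" for q unfolding k_def by (cases q) simp
  have eta2: "P2 \<eta> q = -3 * k" for q
  proof (cases q)
    case (fields x t u) then show ?thesis
    using st5[of x t u] Z9 Z10 k[of "(x,t,u)"] by simp
  qed
  have phi1: "P1 \<phi> q = 2 * k / a" for q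
  proof (cases q)
    case (fields x t u)
    have "a * P1 \<phi> (x, t, u) = 2 * k" using st5[of x t u] Z9 k[of "(x,t,u)"] by simp
    then show ?thesis using a fields by (simp add: field_simps)
  qed
  have phi2: "P2 \<phi> q = -2 * k" for q using F2 k eta2 by simp
  have phi3: "P3 \<phi> q = - k" for q using F1 k by simp
  have hx: "\<xi> (x, t, u) = \<xi> (0,0,0) + k * x + 0 * t + 0 * u" for x t u
    by (rule affine3) (use sm k z1 z2 in auto)
  have ht: "\<eta> (x, t, u) = \<eta> (0,0,0) + 0 * x + (-3 * k) * t + 0 * u" for x t u
    by (rule affine3) (use sm eta2 z3 z4 in auto)
  have hp: "\<phi> (x, t, u) = \<phi> (0,0,0) + (2 * k / a) * x + (-2 * k) * t + (- k) * u" for x t u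
    by (rule affine3) (use sm phi1 phi2 phi3 in auto)
  show ?thesis
  proof (intro exI allI conjI)
    fix x t u
    show "\<xi> (x, t, u) = - (x / 3) * (-3 * k) + \<xi> (0,0,0)" using hx[of x t u] by simp
    show "\<eta> (x, t, u) = (-3 * k) * t + \<eta> (0,0,0)" using ht[of x t u] by simp
    show "\<phi> (x, t, u) = (2 * t / 3 + u / 3 - 2 * x / (3 * a)) * (-3 * k) + \<phi> (0,0,0)"
      using hp[of x t u] a by (simp add: field_simps)
  qed
qed

theorem mainTheorem1:
  fixes a :: real and \<xi> \<eta> \<phi> :: "real \<times> real \<times> real \<Rightarrow> real"
  assumes "a \<noteq> 0" and "smooth \<xi>" and "smooth \<eta>" and "smooth \<phi>"
  shows "HR_symmetry a \<xi> \<eta> \<phi> \<longleftrightarrow>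
    (\<exists>c1 c2 c3 c4 :: real. \<forall>x t u.
        \<xi> (x, t, u) = - (x / 3) * c1 + c3 \<and>
        \<eta> (x, t, u) = c1 * t + c2 \<and>
        \<phi> (x, t, u) = (2 * t / 3 + u / 3 - 2 * x / (3 * a)) * c1 + c4)"
proof
  assume "HR_symmetry a \<xi> \<eta> \<phi>"
  then show "\<exists>c1 c2 c3 c4 :: real. \<forall>x t u.
        \<xi> (x, t, u) = - (x / 3) * c1 + c3 \<and>
        \<eta> (x, t, u) = c1 * t + c2 \<and>
        \<phi> (x, t, u) = (2 * t / 3 + u / 3 - 2 * x / (3 * a)) * c1 + c4"
    using only_if[OF assms] by blast
next
  assume "\<exists>c1 c2 c3 c4 :: real. \<forall>x t u.
        \<xi> (x, t, u) = - (x / 3) * c1 + c3 \<and>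
        \<eta> (x, t, u) = c1 * t + c2 \<and>
        \<phi> (x, t, u) = (2 * t / 3 + u / 3 - 2 * x / (3 * a)) * c1 + c4"
  then obtain c1 c2 c3 c4 where "\<forall>x t u.
        \<xi> (x, t, u) = - (x / 3) * c1 + c3 \<and>
        \<eta> (x, t, u) = c1 * t + c2 \<and>
        \<phi> (x, t, u) = (2 * t / 3 + u / 3 - 2 * x / (3 * a)) * c1 + c4" by blast
  then show "HR_symmetry a \<xi> \<eta> \<phi>" by (rule if_dir[OF assms(1)])
qed

end
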